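(* Let $P=(U,R)$ be a partial order. Then $P$ is a linear order if and only if $NC(P)$ is a chain graph.
   Context: For $U=\{u_1,\dots,u_n\}$ and a disjoint copy $V=\{v_1,\dots,v_n\}$, $NC(P)=(U,V,E)$ is the bipartite graph with $u_iv_j\in E$ iff $u_i\le_P u_j$ (i.e. $u_i<_Pu_j$ or $i=j$). A bipartite graph is a chain graph if, for any two vertices in the same color class, one neighborhood contains the other. A linear order is a partial order in which every two distinct elements are comparable. *)

theory Defs
  imports Main
begin

text \<open>A bipartite graph (X, Y, E) with colour classes X and Y and edge set E \<subseteq> X \<times> Y.
  The two colour classes live in (possibly) separate types, so they are disjoint.\<close>
type_synonym ('a, 'b) bigraph = "'a set \<times> 'b set \<times> ('a \<times> 'b) set"

definition left_nbhd :: "('a, 'b) bigraph \<Rightarrow> 'a \<Rightarrow> 'b set" where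
  "left_nbhd G x = (case G of (X, Y, E) \<Rightarrow> {y \<in> Y. (x, y) \<in> E})"

definition right_nbhd :: "('a, 'b) bigraph \<Rightarrow> 'b \<Rightarrow> 'a set" where
  "right_nbhd G y = (case G of (X, Y, E) \<Rightarrow> {x \<in> X. (x, y) \<in> E})"

definition chain_graph :: "('a, 'b) bigraph \<Rightarrow> bool" where
  "chain_graph G = (case G of (X, Y, E) \<Rightarrow>
     E \<subseteq> X \<times> Y \<and>
     (\<forall>x1\<in>X. \<forall>x2\<in>X. left_nbhd G x1 \<subseteq> left_nbhd G x2 \<or> left_nbhd G x2 \<subseteq> left_nbhd G x1) \<and>
     (\<forall>y1\<in>Y. \<forall>y2\<in>Y. right_nbhd G y1 \<subseteq> right_nbhd G y2 \<or> right_nbhd G y2 \<subseteq> right_nbhd G y1))"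

text \<open>NC(P) for P = (U, R): colour class U (first component), a disjoint copy V of U
  (second component; v_j is represented by u_j itself, but in a separate colour class),
  and u_i v_j an edge iff u_i <_P u_j or i = j.\<close>
definition NC :: "'a set \<Rightarrow> 'a rel \<Rightarrow> ('a, 'a) bigraph" where
  "NC U R = (U, U, {(u, v). u \<in> U \<and> v \<in> U \<and> ((u, v) \<in> R \<or> u = v)})"

end

theory Submission
  imports Defs
begin

theorem lemma9:
  fixes U :: "'a set" and R :: "'a rel"
  assumes "finite U" and "partial_order_on U R"
  shows "linear_order_on U R \<longleftrightarrow> chain_graph (NC U R)"
proof -
  have refl: "refl_on U R" and tr: "trans R" and an: "antisym R"
    using assms(2) unfolding partial_order_on_def preorder_on_def by auto
  have reflx: "\<And>x. x \<in> U \<Longrightarrow> (x,x) \<in> R" using refl by (auto simp: refl_on_def)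
  have L: "\<And>x. left_nbhd (NC U R) x = {y \<in> U. x \<in> U \<and> ((x,y) \<in> R \<or> x = y)}"
    by (auto simp: left_nbhd_def NC_def)
  have Rn: "\<And>y. right_nbhd (NC U R) y = {x \<in> U. y \<in> U \<and> ((x,y) \<in> R \<or> x = y)}"
    by (auto simp: right_nbhd_def NC_def)
  show ?thesis
  proof
    assume lin: "linear_order_on U R"
    hence tot: "total_on U R" by (simp add: linear_order_on_def)
    have c1: "\<forall>x1\<in>U. \<forall>x2\<in>U. left_nbhd (NC U R) x1 \<subseteq> left_nbhd (NC U R) x2 \<or> left_nbhd (NC U R) x2 \<subseteq> left_nbhd (NC U R) x1"
    proof (intro ballI)
      fix x1 x2 assume a: "x1 \<in> U" "x2 \<in> U"
      have "(x1,x2) \<in> R \<or> (x2,x1) \<in> R" using tot a reflx by (cases "x1 = x2") (auto simp: total_on_def)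
      thus "left_nbhd (NC U R) x1 \<subseteq> left_nbhd (NC U R) x2 \<or> left_nbhd (NC U R) x2 \<subseteq> left_nbhd (NC U R) x1"
        unfolding L using a tr by (auto dest: transD)
    qed
    have c2: "\<forall>x1\<in>U. \<forall>x2\<in>U. right_nbhd (NC U R) x1 \<subseteq> right_nbhd (NC U R) x2 \<or> right_nbhd (NC U R) x2 \<subseteq> right_nbhd (NC U R) x1"
    proof (intro ballI)
      fix x1 x2 assume a: "x1 \<in> U" "x2 \<in> U"
      have "(x1,x2) \<in> R \<or> (x2,x1) \<in> R" using tot a reflx by (cases "x1 = x2") (auto simp: total_on_def)
      thus "right_nbhd (NC U R) x1 \<subseteq> right_nbhd (NC U R) x2 \<or> right_nbhd (NC U R) x2 \<subseteq> right_nbhd (NC U R) x1"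
        unfolding Rn using a tr by (auto dest: transD)
    qed
    show "chain_graph (NC U R)" using c1 c2 by (auto simp: chain_graph_def NC_def)
  next
    assume cg: "chain_graph (NC U R)"
    hence c1: "\<forall>x1\<in>U. \<forall>x2\<in>U. left_nbhd (NC U R) x1 \<subseteq> left_nbhd (NC U R) x2 \<or> left_nbhd (NC U R) x2 \<subseteq> left_nbhd (NC U R) x1"
      by (simp add: chain_graph_def NC_def)
    have "total_on U R"
      unfolding total_on_def
    proof (intro ballI impI)
      fix x y assume a: "x \<in> U" "y \<in> U" "x \<noteq> y"
      from c1 a have "left_nbhd (NC U R) x \<subseteq> left_nbhd (NC U R) y \<or> left_nbhd (NC U R) y \<subseteq> left_nbhd (NC U R) x" by blast
      thus "(x,y) \<in> R \<or> (y,x) \<in> R"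
      proof
        assume "left_nbhd (NC U R) x \<subseteq> left_nbhd (NC U R) y"
        moreover have "x \<in> left_nbhd (NC U R) x" using a unfolding L by auto
        ultimately show ?thesis using a unfolding L by auto
      next
        assume "left_nbhd (NC U R) y \<subseteq> left_nbhd (NC U R) x"
        moreover have "y \<in> left_nbhd (NC U R) y" using a unfolding L by auto
        ultimately show ?thesis using a unfolding L by auto
      qed
    qed
    thus "linear_order_on U R" using assms(2) by (simp add: linear_order_on_def)
  qed
qed

end
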